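(* Fix $\ell\geq2$, let $A=\ell\times\omega$, and fix a recursive bijection $\psi:(\ell-1)\times\omega\times\omega\to\omega$. For $\alpha\in\{0,1\}^\omega$ define $S_\alpha$ on $A$ by: $S_\alpha(a,b)$ holds iff $a=(i,n)$, $b=(i+1,m)$ for some $i<\ell-1$ with $\alpha_{\psi(i,n,m)}=1$. Let $G$ be the set of $\alpha$ such that $\langle A,S_\alpha,\{0\}\times\omega,\ldots,\{\ell-1\}\times\omega\rangle$ is a model of $T_\ell$. Then $\lambda(G)=1$, i.e. with probability $1$ a sequence $\alpha$ defines a generic $\ell$-diagram.
   Context: $\lambda$ is the uniform (fair-coin product) probability measure on $\{0,1\}^\omega$, under which the bits $\alpha_i$ are independent and each equals $1$ with probability $1/2$. The signature has unary relations $L_0,\ldots,L_{\ell-1}$ and binary $S$. The theory $T_\ell$: (i) every $x$ satisfies some $L_j(x)$; (ii) no $x$ satisfies $L_i(x)\wedge L_j(x)$ for $i<j$; (iii) $S(x,y)$ and $L_i(x)$ with $i\le\ell-2$ imply $L_{i+1}(y)$; (iv) for each $i<\ell$ and all finite $X,Y\subseteq L_{i+1}$ with $X\cap Y=\emptyset$, $Z\subseteq L_i$, $X',Y'\subseteq L_{i-1}$ with $X'\cap Y'=\emptyset$ ($L_{-1},L_\ell$ read as empty), there is $z\in L_i\setminus Z$ with $S(z,x)$ for $x\in X$, $S(x',z)$ for $x'\in X'$, $\neg S(z,y)$ for $y\in Y$, $\neg S(y',z)$ for $y'\in Y'$. Countable models of $T_\ell$ are called generic $\ell$-diagrams. *)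

theory Defs
  imports "HOL-Probability.Probability"
begin

text \<open>The fair-coin product measure on infinite binary sequences; bit i of alpha
  is 1 iff alpha i = True.\<close>
definition coin_measure :: "(nat \<Rightarrow> bool) measure" where
  "coin_measure = PiM UNIV (\<lambda>_::nat. measure_pmf (bernoulli_pmf (1/2)))"

text \<open>Interpretation of L_k in a structure with universe M and unary predicates L;
  L_{-1} and L_l (and beyond) are read as empty.\<close>
definition layer :: "nat \<Rightarrow> 'a set \<Rightarrow> (nat \<Rightarrow> 'a set) \<Rightarrow> int \<Rightarrow> 'a set" where
  "layer l M L k = (if 0 \<le> k \<and> k < int l then M \<inter> L (nat k) else {})"

definition model_T :: "nat \<Rightarrow> 'a set \<Rightarrow> (nat \<Rightarrow> 'a set) \<Rightarrow> ('a \<Rightarrow> 'a \<Rightarrow> bool) \<Rightarrow> bool" where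
  "model_T l M L S \<longleftrightarrow>
     (\<forall>x\<in>M. \<exists>j<l. x \<in> L j) \<and>
     (\<forall>x\<in>M. \<forall>i j. i < j \<and> j < l \<longrightarrow> \<not> (x \<in> L i \<and> x \<in> L j)) \<and>
     (\<forall>x\<in>M. \<forall>y\<in>M. \<forall>i. i + 2 \<le> l \<and> S x y \<and> x \<in> L i \<longrightarrow> y \<in> L (i + 1)) \<and>
     (\<forall>i<l. \<forall>X Y Z X' Y'.
        finite X \<and> finite Y \<and> finite Z \<and> finite X' \<and> finite Y' \<and>
        X \<subseteq> layer l M L (int i + 1) \<and> Y \<subseteq> layer l M L (int i + 1) \<and> X \<inter> Y = {} \<and>
        Z \<subseteq> layer l M L (int i) \<and>
        X' \<subseteq> layer l M L (int i - 1) \<and> Y' \<subseteq> layer l M L (int i - 1) \<and> X' \<inter> Y' = {}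
        \<longrightarrow> (\<exists>z \<in> layer l M L (int i) - Z.
               (\<forall>x\<in>X. S z x) \<and> (\<forall>x'\<in>X'. S x' z) \<and>
               (\<forall>y\<in>Y. \<not> S z y) \<and> (\<forall>y'\<in>Y'. \<not> S y' z)))"

definition S_alpha :: "nat \<Rightarrow> (nat \<times> nat \<times> nat \<Rightarrow> nat) \<Rightarrow> (nat \<Rightarrow> bool)
     \<Rightarrow> nat \<times> nat \<Rightarrow> nat \<times> nat \<Rightarrow> bool" where
  "S_alpha l \<psi> \<alpha> a b \<longleftrightarrow>
     (\<exists>i n m. i + 1 < l \<and> a = (i, n) \<and> b = (i + 1, m) \<and> \<alpha> (\<psi> (i, n, m)))"

definition A_univ :: "nat \<Rightarrow> (nat \<times> nat) set" where
  "A_univ l = {..<l} \<times> UNIV"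

definition A_pred :: "nat \<Rightarrow> (nat \<times> nat) set" where
  "A_pred j = {j} \<times> UNIV"

end

theory Submission
  imports Defs
begin

abbreviation "B \<equiv> measure_pmf (bernoulli_pmf (1/2))"

lemma pps: "product_prob_space (\<lambda>_::nat. B)"
  by (simp add: product_prob_space_def product_prob_space_axioms_def product_sigma_finite_def
      prob_space_measure_pmf prob_space_imp_sigma_finite)

lemma ps: "prob_space coin_measure"
proof -
  interpret product_prob_space "\<lambda>_::nat. B" UNIV by (rule pps)
  show ?thesis unfolding coin_measure_def by unfold_locales
qed

lemma space_coin[simp]: "space coin_measure = UNIV"
  by (simp add: coin_measure_def space_PiM)

lemma pred_coin[measurable]: "Measurable.pred coin_measure (\<lambda>\<alpha>. \<alpha> k)"
proof -
  have "(\<lambda>\<alpha>. \<alpha> k) \<in> measurable coin_measure B"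
    unfolding coin_measure_def by (rule measurable_component_singleton) simp
  then show ?thesis by (simp add: measurable_def)
qed

lemma indep0: "prob_space.indep_vars coin_measure (\<lambda>_. B) (\<lambda>i \<omega>. \<omega> i) UNIV"
proof -
  interpret product_prob_space "\<lambda>_::nat. B" UNIV by (rule pps)
  interpret C: prob_space coin_measure by (rule ps)
  show ?thesis
    apply (subst C.indep_vars_iff_distr_eq_PiM)
      apply simp
     apply (unfold coin_measure_def)[1]
     apply (rule measurable_component_singleton, simp)
    apply (simp add: coin_measure_def PiM_component restrict_UNIV)
    done
qed

lemma key:
  fixes T F :: "nat \<Rightarrow> nat set"
  assumes finT: "\<And>n. finite (T n)" and finF: "\<And>n. finite (F n)"
    and TF: "\<And>n. T n \<inter> F n = {}"
    and disj: "disjoint_family (\<lambda>n. T n \<union> F n)"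
    and cardle: "\<And>n. card (T n \<union> F n) \<le> c"
  shows "AE \<alpha> in coin_measure. \<exists>n. (\<forall>k\<in>T n. \<alpha> k) \<and> (\<forall>k\<in>F n. \<not> \<alpha> k)"
proof -
  interpret PP: product_prob_space "\<lambda>_::nat. B" UNIV by (rule pps)
  interpret C: prob_space coin_measure by (rule ps)
  define K where "K n = T n \<union> F n" for n
  define Good where "Good n y \<longleftrightarrow> (\<forall>k\<in>T n. y k) \<and> (\<forall>k\<in>F n. \<not> y k)" for n and y :: "nat \<Rightarrow> bool"
  define E' where "E' n = {\<omega> \<in> space coin_measure. \<not> Good n (restrict (\<lambda>i. \<omega> i) (K n))}" for n
  have finK: "finite (K n)" for n using finT finF by (simp add: K_def)
  have ind1: "C.indep_vars (\<lambda>n. PiM (K n) (\<lambda>_. B)) (\<lambda>n \<omega>. restrict (\<lambda>i. \<omega> i) (K n)) UNIV"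
    by (rule C.indep_vars_restrict[OF indep0]) (use disj in \<open>auto simp: K_def\<close>)
  have meas: "{y \<in> space (PiM (K n) (\<lambda>_. B)). \<not> Good n y} \<in> sets (PiM (K n) (\<lambda>_. B))" for n
  proof -
    have "(\<lambda>y. y k) \<in> measurable (PiM (K n) (\<lambda>_. B)) (count_space UNIV)" if "k \<in> K n" for k
    proof -
      have "(\<lambda>y. y k) \<in> measurable (PiM (K n) (\<lambda>_. B)) B"
        by (rule measurable_component_singleton) (rule that)
      then show ?thesis by (simp add: measurable_def)
    qed
    then have "Measurable.pred (PiM (K n) (\<lambda>_. B)) (\<lambda>y. \<not> Good n y)"
      unfolding Good_def using finT finF
      by (intro pred_intros_logic pred_intros_finite; auto simp: K_def)
    then show ?thesis by (simp add: pred_def)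
  qed
  have indE: "C.indep_events E' UNIV"
    unfolding E'_def by (rule C.indep_eventsI_indep_vars[OF ind1 meas])
  have E'eq: "E' n = {\<omega>. \<not> Good n \<omega>}" for n
    by (auto simp: E'_def Good_def K_def)
  have Esets: "E' n \<in> sets coin_measure" for n
    using indE by (auto simp: C.indep_events_def)
  define q :: real where "q = 1 - (1/2)^c"
  have probE': "C.prob (E' n) \<le> q" for n
  proof -
    have "{\<omega>. Good n \<omega>} = {x \<in> space coin_measure. \<forall>i\<in>K n. x i \<in> (if i \<in> T n then {True} else {False})}"
      using TF[of n] by (auto simp: Good_def K_def)
    then have "emeasure coin_measure {\<omega>. Good n \<omega>} = (\<Prod>i\<in>K n. emeasure B (if i \<in> T n then {True} else {False}))"
      unfolding coin_measure_def by (simp add: PP.emeasure_PiM_Collect finK del: space_coin)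
    also have "\<dots> = (\<Prod>i\<in>K n. ennreal (1/2))"
      by (intro prod.cong refl) (simp add: emeasure_pmf_single)
    also have "\<dots> = ennreal ((1/2)^card (K n))"
      by (simp only: prod_constant) (rule ennreal_power, simp)
    finally have pG: "C.prob {\<omega>. Good n \<omega>} = (1/2)^card (K n)"
      by (simp add: C.emeasure_eq_measure)
    have "UNIV - E' n \<in> sets coin_measure"
      using sets.compl_sets[OF Esets[of n]] by simp
    moreover have "UNIV - E' n = {\<omega>. Good n \<omega>}" by (auto simp: E'eq)
    ultimately have Gs: "{\<omega>. Good n \<omega>} \<in> sets coin_measure" by simp
    have pE: "C.prob (E' n) = 1 - C.prob {\<omega>. Good n \<omega>}"
      using Gs C.prob_compl[of "{\<omega>. Good n \<omega>}"] Esets[of n] by (simp add: E'eq Compl_eq_Diff_UNIV[symmetric] set_diff_eq)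
    have "((1::real)/2)^c \<le> (1/2)^card (K n)"
      using cardle[of n] by (intro power_decreasing) (auto simp: K_def)
    then show ?thesis using pE pG by (simp add: q_def)
  qed
  have q: "0 \<le> q" "q < 1" by (auto simp: q_def power_le_one)
  define N where "N = (\<Inter>n. E' n)"
  have Nsets: "N \<in> sets coin_measure" unfolding N_def using Esets by auto
  have bound: "C.prob N \<le> q ^ Suc m" for m
  proof -
    have "C.prob N \<le> C.prob (\<Inter>n\<in>{..m}. E' n)"
      by (rule C.finite_measure_mono) (use Esets in \<open>auto simp: N_def\<close>)
    also have "\<dots> = (\<Prod>n\<in>{..m}. C.prob (E' n))"
      using indE by (auto simp: C.indep_events_def)
    also have "\<dots> \<le> (\<Prod>n\<in>{..m}. q)"
      by (intro prod_mono) (auto simp: probE')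
    finally show ?thesis by simp
  qed
  have "(\<lambda>m. q ^ Suc m) \<longlonglongrightarrow> 0"
    using LIMSEQ_realpow_zero[OF q] by (rule LIMSEQ_Suc)
  then have "C.prob N \<le> 0"
    by (rule tendsto_lowerbound) (use bound in \<open>simp_all del: power_Suc\<close>)
  then have "N \<in> null_sets coin_measure"
    using Nsets by (simp add: null_sets_def C.emeasure_eq_measure measure_nonneg antisym)
  then show ?thesis
    by (rule AE_I') (auto simp: N_def E'eq Good_def)
qed


lemma S_simp: "S_alpha l \<psi> \<alpha> (a,b) (c,d) \<longleftrightarrow> a + 1 < l \<and> c = a + 1 \<and> \<alpha> (\<psi> (a,b,d))"
  by (auto simp: S_alpha_def)

lemma layer_simp: "layer l (A_univ l) A_pred k = (if 0 \<le> k \<and> k < int l then {nat k} \<times> UNIV else {})"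
  by (auto simp: layer_def A_univ_def A_pred_def)

lemma S_meas[measurable]: "Measurable.pred coin_measure (\<lambda>\<alpha>. S_alpha l \<psi> \<alpha> z x)"
proof -
  obtain a b c d where "z = (a,b)" "x = (c,d)" by (cases z, cases x)
  then show ?thesis by (simp add: S_simp)
qed

definition cstr :: "nat \<Rightarrow> nat \<Rightarrow> (nat\<times>nat) set \<Rightarrow> (nat\<times>nat) set \<Rightarrow> (nat\<times>nat) set \<Rightarrow> (nat\<times>nat) set \<Rightarrow> (nat\<times>nat) set \<Rightarrow> bool" where
  "cstr l i X Y Z X' Y' \<longleftrightarrow>
        X \<subseteq> layer l (A_univ l) A_pred (int i + 1) \<and> Y \<subseteq> layer l (A_univ l) A_pred (int i + 1) \<and> X \<inter> Y = {} \<and>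
        Z \<subseteq> layer l (A_univ l) A_pred (int i) \<and>
        X' \<subseteq> layer l (A_univ l) A_pred (int i - 1) \<and> Y' \<subseteq> layer l (A_univ l) A_pred (int i - 1) \<and> X' \<inter> Y' = {}"

definition good where
  "good l \<psi> i X Y Z X' Y' \<alpha> \<longleftrightarrow> (\<exists>z \<in> layer l (A_univ l) A_pred (int i) - Z.
               (\<forall>x\<in>X. S_alpha l \<psi> \<alpha> z x) \<and> (\<forall>x'\<in>X'. S_alpha l \<psi> \<alpha> x' z) \<and>
               (\<forall>y\<in>Y. \<not> S_alpha l \<psi> \<alpha> z y) \<and> (\<forall>y'\<in>Y'. \<not> S_alpha l \<psi> \<alpha> y' z))"

lemma good_meas[measurable]: "Measurable.pred coin_measure (good l \<psi> i X Y Z X' Y')"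
  unfolding good_def by measurable

lemma model_iff: "model_T l (A_univ l) A_pred (S_alpha l \<psi> \<alpha>) \<longleftrightarrow>
   (\<forall>i<l. \<forall>X\<in>Collect finite. \<forall>Y\<in>Collect finite. \<forall>Z\<in>Collect finite. \<forall>X'\<in>Collect finite. \<forall>Y'\<in>Collect finite.
      cstr l i X Y Z X' Y' \<longrightarrow> good l \<psi> i X Y Z X' Y' \<alpha>)"
proof -
  have 1: "\<forall>x\<in>A_univ l. \<exists>j<l. x \<in> A_pred j" by (auto simp: A_univ_def A_pred_def)
  have 2: "\<forall>x\<in>A_univ l. \<forall>i j. i < j \<and> j < l \<longrightarrow> \<not> (x \<in> A_pred i \<and> x \<in> A_pred j)"
    by (auto simp: A_pred_def)
  have 3: "\<forall>x\<in>A_univ l. \<forall>y\<in>A_univ l. \<forall>i. i + 2 \<le> l \<and> S_alpha l \<psi> \<alpha> x y \<and> x \<in> A_pred i \<longrightarrow> y \<in> A_pred (i + 1)"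
    by (auto simp: A_pred_def S_alpha_def)
  have 4: "\<And>P Q. (\<forall>i<l. \<forall>X Y Z X' Y'. finite X \<and> finite Y \<and> finite Z \<and> finite X' \<and> finite Y' \<and> P i X Y Z X' Y' \<longrightarrow> Q i X Y Z X' Y')
     \<longleftrightarrow> (\<forall>i<l. \<forall>X\<in>Collect finite. \<forall>Y\<in>Collect finite. \<forall>Z\<in>Collect finite. \<forall>X'\<in>Collect finite. \<forall>Y'\<in>Collect finite.
      P i X Y Z X' Y' \<longrightarrow> Q i X Y Z X' Y')" by auto
  show ?thesis unfolding model_T_def using 1 2 3 4[of "\<lambda>i X Y Z X' Y'. cstr l i X Y Z X' Y'" "\<lambda>i X Y Z X' Y'. good l \<psi> i X Y Z X' Y' \<alpha>"]
    unfolding cstr_def good_def by argo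
qed

lemma pred_Ball_countable:
  assumes "countable I" "\<And>i. i \<in> I \<Longrightarrow> Measurable.pred M (\<lambda>x. P x i)"
  shows "Measurable.pred M (\<lambda>x. \<forall>i\<in>I. P x i)"
  using assms unfolding pred_def by (intro sets.sets_Collect_countable_All') auto

lemma meas_G: "{\<alpha>. model_T l (A_univ l) A_pred (S_alpha l \<psi> \<alpha>)} \<in> sets coin_measure"
proof -
  have "Measurable.pred coin_measure (\<lambda>\<alpha>. \<forall>i<l. \<forall>X\<in>Collect finite. \<forall>Y\<in>Collect finite. \<forall>Z\<in>Collect finite. \<forall>X'\<in>Collect finite. \<forall>Y'\<in>Collect finite.
      cstr l i X Y Z X' Y' \<longrightarrow> good l \<psi> i X Y Z X' Y' \<alpha>)"
    by (intro pred_intros_countable(1) pred_intros_imp' pred_Ball_countable countable_Collect_finite good_meas)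
  then show ?thesis by (simp add: model_iff pred_def)
qed


lemma ae_good:
  assumes inj: "inj_on \<psi> ({..<l - 1} \<times> (UNIV :: nat set) \<times> (UNIV :: nat set))"
    and i: "i < l" and fin: "finite X" "finite Y" "finite Z" "finite X'" "finite Y'"
    and c: "cstr l i X Y Z X' Y'"
  shows "AE \<alpha> in coin_measure. good l \<psi> i X Y Z X' Y' \<alpha>"
proof -
  have psi_eq: "a = a' \<and> b = b' \<and> d = d'" if "\<psi> (a,b,d) = \<psi> (a',b',d')" "a < l - 1" "a' < l - 1" for a b d a' b' d'
    using inj_onD[OF inj that(1)] that(2,3) by auto
  have e1: "nat (int i + 1) = i + 1" by simp
  have e2: "nat (int i - 1) = i - 1" by simp
  have hX: "i + 1 < l \<and> x = (i+1, snd x)" if "x \<in> X" for x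
    using c that unfolding cstr_def layer_simp e1 by (auto split: if_splits)
  have hY: "i + 1 < l \<and> x = (i+1, snd x)" if "x \<in> Y" for x
    using c that unfolding cstr_def layer_simp e1 by (auto split: if_splits)
  have hX': "1 \<le> i \<and> x = (i-1, snd x)" if "x \<in> X'" for x
    using c that unfolding cstr_def layer_simp e2 by (auto split: if_splits)
  have hY': "1 \<le> i \<and> x = (i-1, snd x)" if "x \<in> Y'" for x
    using c that unfolding cstr_def layer_simp e2 by (auto split: if_splits)
  have XY: "X \<inter> Y = {}" "X' \<inter> Y' = {}" using c by (auto simp: cstr_def)
  obtain N0 where N0: "\<forall>n\<in>snd ` Z. n < N0"
    using fin(3) finite_nat_set_iff_bounded by blast
  define T where "T n = (\<lambda>x. \<psi> (i, n + N0, snd x)) ` X \<union> (\<lambda>x. \<psi> (fst x, snd x, n + N0)) ` X'" for n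
  define F where "F n = (\<lambda>x. \<psi> (i, n + N0, snd x)) ` Y \<union> (\<lambda>x. \<psi> (fst x, snd x, n + N0)) ` Y'" for n
  have "AE \<alpha> in coin_measure. \<exists>n. (\<forall>k\<in>T n. \<alpha> k) \<and> (\<forall>k\<in>F n. \<not> \<alpha> k)"
  proof (rule key)
    show "finite (T n)" "finite (F n)" for n using fin by (auto simp: T_def F_def)
    show "T n \<inter> F n = {}" for n
    proof (rule ccontr)
      assume "T n \<inter> F n \<noteq> {}"
      then obtain k where k: "k \<in> T n" "k \<in> F n" by blast
      show False
      proof (cases "k \<in> (\<lambda>x. \<psi> (i, n + N0, snd x)) ` X")
        case True
        then obtain x where x: "x \<in> X" "k = \<psi> (i, n + N0, snd x)" by blast
        from k(2) show False unfolding F_def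
        proof
          assume "k \<in> (\<lambda>x. \<psi> (i, n + N0, snd x)) ` Y"
          then obtain y where y: "y \<in> Y" "k = \<psi> (i, n + N0, snd y)" by blast
          have "snd x = snd y" using psi_eq[of i "n+N0" "snd x" i "n+N0" "snd y"] x y hX[OF x(1)] by auto
          then have "x = y" using hX[OF x(1)] hY[OF y(1)] by (simp add: prod_eq_iff)
          then show False using x y XY by auto
        next
          assume "k \<in> (\<lambda>x. \<psi> (fst x, snd x, n + N0)) ` Y'"
          then obtain y where y: "y \<in> Y'" "k = \<psi> (fst y, snd y, n + N0)" by blast
          have a1: "i < l - 1" using conjunct1[OF hX[OF x(1)]] by arith
          have a2: "fst y = i - 1" "1 \<le> i" using hY'[OF y(1)] by (metis fst_conv, simp)
          have "i = fst y" using psi_eq[of i "n+N0" "snd x" "fst y" "snd y" "n+N0"] x(2) y(2) a1 a2 by simp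
          then show False using a2 by simp
        qed
      next
        case False
        then obtain x where x: "x \<in> X'" "k = \<psi> (fst x, snd x, n + N0)" using k(1) by (auto simp: T_def)
        from k(2) show False unfolding F_def
        proof
          assume "k \<in> (\<lambda>x. \<psi> (i, n + N0, snd x)) ` Y"
          then obtain y where y: "y \<in> Y" "k = \<psi> (i, n + N0, snd y)" by blast
          have a1: "i < l - 1" using conjunct1[OF hY[OF y(1)]] by arith
          have a2: "fst x = i - 1" "1 \<le> i" using hX'[OF x(1)] by (metis fst_conv, simp)
          have "i = fst x" using psi_eq[of i "n+N0" "snd y" "fst x" "snd x" "n+N0"] x(2) y(2) a1 a2 by simp
          then show False using a2 by simp
        next
          assume "k \<in> (\<lambda>x. \<psi> (fst x, snd x, n + N0)) ` Y'"
          then obtain y where y: "y \<in> Y'" "k = \<psi> (fst y, snd y, n + N0)" by blast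
          have a1: "fst x = i - 1" "1 \<le> i" using hX'[OF x(1)] by (metis fst_conv, simp)
          have a2: "fst y = i - 1" using hY'[OF y(1)] by (metis fst_conv)
          have "fst x = fst y \<and> snd x = snd y" using psi_eq[of "fst x" "snd x" "n+N0" "fst y" "snd y" "n+N0"] x(2) y(2) a1 a2 i by simp
          then have "x = y" by (simp add: prod_eq_iff)
          then show False using x y XY by auto
        qed
      qed
    qed
    have form: "\<exists>s. (k = \<psi> (i, n+N0, s) \<and> i < l - 1) \<or> (k = \<psi> (i-1, s, n+N0) \<and> 1 \<le> i \<and> i - 1 < l - 1)"
      if "k \<in> T n \<union> F n" for k n
    proof -
      have "(\<exists>x\<in>X \<union> Y. k = \<psi> (i, n + N0, snd x)) \<or> (\<exists>x\<in>X' \<union> Y'. k = \<psi> (fst x, snd x, n + N0))"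
        using that by (auto simp: T_def F_def)
      then show ?thesis
      proof (elim disjE bexE)
        fix x assume "x \<in> X \<union> Y" "k = \<psi> (i, n + N0, snd x)"
        moreover have "i < l - 1" using hX hY \<open>x \<in> X \<union> Y\<close> by (metis Un_iff add_lessD1 less_diff_conv)
        ultimately show ?thesis by blast
      next
        fix x assume x: "x \<in> X' \<union> Y'" "k = \<psi> (fst x, snd x, n + N0)"
        then have "fst x = i - 1" "1 \<le> i" using hX' hY' by (metis Un_iff fst_conv)+
        moreover have "i - 1 < l - 1" using i \<open>1 \<le> i\<close> by arith
        ultimately show ?thesis using x by auto
      qed
    qed
    show "disjoint_family (\<lambda>n. T n \<union> F n)"
      unfolding disjoint_family_on_def
    proof (intro ballI impI)
      fix n m :: nat assume nm: "n \<noteq> m"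
      show "(T n \<union> F n) \<inter> (T m \<union> F m) = {}"
      proof (rule ccontr)
        assume "(T n \<union> F n) \<inter> (T m \<union> F m) \<noteq> {}"
        then obtain k where k: "k \<in> T n \<union> F n" "k \<in> T m \<union> F m" by blast
        obtain s where s: "(k = \<psi> (i, n+N0, s) \<and> i < l - 1) \<or> (k = \<psi> (i-1, s, n+N0) \<and> 1 \<le> i \<and> i - 1 < l - 1)"
          using form[OF k(1)] by blast
        obtain t where t: "(k = \<psi> (i, m+N0, t) \<and> i < l - 1) \<or> (k = \<psi> (i-1, t, m+N0) \<and> 1 \<le> i \<and> i - 1 < l - 1)"
          using form[OF k(2)] by blast
        from s t nm show False
          using psi_eq[of i "n+N0" s i "m+N0" t] psi_eq[of i "n+N0" s "i-1" t "m+N0"]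
                psi_eq[of "i-1" s "n+N0" i "m+N0" t] psi_eq[of "i-1" s "n+N0" "i-1" t "m+N0"]
          by auto
      qed
    qed
    show "card (T n \<union> F n) \<le> card X + card X' + (card Y + card Y')" for n
    proof -
      have "card (T n \<union> F n) \<le> card (T n) + card (F n)" by (rule card_Un_le)
      also have "card (T n) \<le> card X + card X'"
        unfolding T_def by (rule order.trans[OF card_Un_le add_mono[OF card_image_le card_image_le]]) (use fin in auto)
      also have "card (F n) \<le> card Y + card Y'"
        unfolding F_def by (rule order.trans[OF card_Un_le add_mono[OF card_image_le card_image_le]]) (use fin in auto)
      finally show ?thesis by simp
    qed
  qed
  then show ?thesis
  proof (rule eventually_mono)
    fix \<alpha> assume "\<exists>n. (\<forall>k\<in>T n. \<alpha> k) \<and> (\<forall>k\<in>F n. \<not> \<alpha> k)"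
    then obtain n where n: "\<forall>k\<in>T n. \<alpha> k" "\<forall>k\<in>F n. \<not> \<alpha> k" by blast
    show "good l \<psi> i X Y Z X' Y' \<alpha>"
      unfolding good_def
    proof (rule bexI[of _ "(i, n + N0)"], intro conjI ballI)
      show "(i, n + N0) \<in> layer l (A_univ l) A_pred (int i) - Z"
        using i N0 by (auto simp: layer_simp)
      fix x assume x: "x \<in> X"
      from hX[OF x] have xe: "x = (i+1, snd x)" and lt: "i+1 < l" by auto
      have "\<alpha> (\<psi> (i, n+N0, snd x))" using n(1) x by (auto simp: T_def)
      then show "S_alpha l \<psi> \<alpha> (i, n + N0) x" using lt by (subst xe) (simp add: S_simp)
    next
      fix x assume x: "x \<in> X'"
      from hX'[OF x] have xe: "x = (i-1, snd x)" and lt: "1 \<le> i" by auto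
      have fx: "fst x = i - 1" using xe by (metis fst_conv)
      have "\<alpha> (\<psi> (fst x, snd x, n+N0))" using n(1) x by (auto simp: T_def)
      then show "S_alpha l \<psi> \<alpha> x (i, n + N0)" using lt i fx by (subst xe) (simp add: S_simp)
    next
      fix x assume x: "x \<in> Y"
      from hY[OF x] have xe: "x = (i+1, snd x)" and lt: "i+1 < l" by auto
      have "\<not> \<alpha> (\<psi> (i, n+N0, snd x))" using n(2) x by (auto simp: F_def)
      then show "\<not> S_alpha l \<psi> \<alpha> (i, n + N0) x" using lt by (subst xe) (simp add: S_simp)
    next
      fix x assume x: "x \<in> Y'"
      from hY'[OF x] have xe: "x = (i-1, snd x)" and lt: "1 \<le> i" by auto
      have fx: "fst x = i - 1" using xe by (metis fst_conv)
      have "\<not> \<alpha> (\<psi> (fst x, snd x, n+N0))" using n(2) x by (auto simp: F_def)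
      then show "\<not> S_alpha l \<psi> \<alpha> x (i, n + N0)" using lt i fx by (subst xe) (simp add: S_simp)
    qed
  qed
qed


theorem lemma3:
  fixes l :: nat and \<psi> :: "nat \<times> nat \<times> nat \<Rightarrow> nat"
  assumes "l \<ge> 2"
    and "bij_betw \<psi> ({..<l - 1} \<times> (UNIV :: nat set) \<times> (UNIV :: nat set)) (UNIV :: nat set)"
  defines "G \<equiv> {\<alpha> :: nat \<Rightarrow> bool. model_T l (A_univ l) A_pred (S_alpha l \<psi> \<alpha>)}"
  shows "G \<in> sets coin_measure \<and> emeasure coin_measure G = 1"
proof -
  interpret C: prob_space coin_measure by (rule ps)
  have inj: "inj_on \<psi> ({..<l - 1} \<times> (UNIV :: nat set) \<times> (UNIV :: nat set))"
    using assms(2) by (rule bij_betw_imp_inj_on)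
  have Gs: "G \<in> sets coin_measure" using meas_G by (simp add: G_def)
  have "AE \<alpha> in coin_measure. \<forall>i<l. \<forall>X\<in>Collect finite. \<forall>Y\<in>Collect finite. \<forall>Z\<in>Collect finite. \<forall>X'\<in>Collect finite. \<forall>Y'\<in>Collect finite.
      cstr l i X Y Z X' Y' \<longrightarrow> good l \<psi> i X Y Z X' Y' \<alpha>"
    unfolding AE_all_countable
    by (intro allI AE_impI AE_ball_countable' countable_Collect_finite ae_good[OF inj]) auto
  then have ae: "AE \<alpha> in coin_measure. \<alpha> \<in> G"
    unfolding G_def mem_Collect_eq model_iff .
  have "C.prob {x \<in> space coin_measure. x \<in> G} = 1"
    using C.prob_Collect_eq_1[of "\<lambda>x. x \<in> G"] Gs ae by simp
  then have "emeasure coin_measure G = 1"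
    by (simp add: C.emeasure_eq_measure)
  with Gs show ?thesis by simp
qed

end
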